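(* Let $n\ge1$, $k\ge1$, and let $s_1,\dots,s_k$ be nonnegative integers. There are $k$ players who independently each open one cereal box per time step; each box contains one of $n$ coupon types chosen uniformly at random, independently of everything else. Player $i$ is currently missing $s_i$ of the $n$ coupon types, and $X_i(s_i)$ is the number of boxes player $i$ must open until they have all $n$ types. For any subset $\{i_1,\dots,i_r\}$ of players let $M(s_{i_1},\dots,s_{i_r}):=\mathbb{E}[\max\{X_{i_1}(s_{i_1}),\dots,X_{i_r}(s_{i_r})\}]$, and let $$m(s_1,\dots,s_k):=\mathbb{E}\left[\min\{X_1(s_1),\dots,X_k(s_k)\}\right]$$ be the expected number of boxes required for the fastest player to complete the collection. Then $$m(s_1,\dots,s_k)=\sum_{i=1}^k M(s_i)-\sum_{i<j}M(s_i,s_j)+\sum_{i<j<l}M(s_i,s_j,s_l)-\cdots+(-1)^{k-1}M(s_1,\dots,s_k)$$ $$=n\left(\sum_{i=1}^k H(s_i)-\sum_{i<j}H(s_i+s_j)+\sum_{i<j<l}H(s_i+s_j+s_l)-\cdots+(-1)^{k-1}H\Big(\sum_{i=1}^k s_i\Big)\right)+o(n).$$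
   Context: $H(m)=\sum_{j=1}^m\frac1j$ denotes the $m$-th harmonic number ($H(0)=0$). The term $o(n)$ denotes a quantity $f(n)$ with $f(n)/n\to0$ as $n\to\infty$ with $k$ and $s_1,\dots,s_k$ fixed. *)

theory Defs
  imports "HOL-Probability.Probability" "HOL-Library.Landau_Symbols"
begin

text \<open>Probability space: coupon (omega (i,j)) is the type found by player i in its
 (j+1)-th box; all coupons are independent and uniform on the n types.\<close>
definition coupon_space :: "nat \<Rightarrow> nat \<Rightarrow> (nat \<times> nat \<Rightarrow> nat) measure" where
  "coupon_space n k = PiM ({..<k} \<times> UNIV) (\<lambda>_. measure_pmf (pmf_of_set {..<n}))"

text \<open>Number of boxes needed to complete the collection {..<n}, starting from the
 collection C and opening the boxes f 0, f 1, ... (0 on the null event of never completing).\<close>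
definition collect_time :: "nat \<Rightarrow> nat set \<Rightarrow> (nat \<Rightarrow> nat) \<Rightarrow> real" where
  "collect_time n C f =
     (if \<exists>t. {..<n} \<subseteq> C \<union> f ` {..<t}
      then real (LEAST t. {..<n} \<subseteq> C \<union> f ` {..<t}) else 0)"

definition player_time :: "nat \<Rightarrow> (nat \<Rightarrow> nat set) \<Rightarrow> nat \<Rightarrow> (nat \<times> nat \<Rightarrow> nat) \<Rightarrow> real" where
  "player_time n C i \<omega> = collect_time n (C i) (\<lambda>j. \<omega> (i, j))"

definition M_exp :: "nat \<Rightarrow> nat \<Rightarrow> (nat \<Rightarrow> nat set) \<Rightarrow> nat set \<Rightarrow> real" where
  "M_exp n k C S = integral\<^sup>L (coupon_space n k) (\<lambda>\<omega>. Max ((\<lambda>i. player_time n C i \<omega>) ` S))"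

definition m_exp :: "nat \<Rightarrow> nat \<Rightarrow> (nat \<Rightarrow> nat set) \<Rightarrow> real" where
  "m_exp n k C = integral\<^sup>L (coupon_space n k) (\<lambda>\<omega>. Min ((\<lambda>i. player_time n C i \<omega>) ` {..<k}))"

end

theory Submission
  imports Defs
begin



lemma prod_one_minus_expand:
  fixes x :: "'a \<Rightarrow> real"
  assumes "finite U"
  shows "(\<Prod>u\<in>U. 1 - x u) = (\<Sum>B\<in>Pow U. (-1) ^ card B * (\<Prod>u\<in>B. x u))"
  using assms
proof (induction U rule: finite_induct)
  case empty
  then show ?case by simp
next
  case (insert a U)
  have fin: "finite (Pow U)" using insert by simp
  have inj: "inj_on (insert a) (Pow U)"
    using insert by (auto simp: inj_on_def)
  have disj: "Pow U \<inter> insert a ` Pow U = {}" using insert by auto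
  have "(\<Sum>B\<in>Pow (insert a U). (-1) ^ card B * (\<Prod>u\<in>B. x u))
      = (\<Sum>B\<in>Pow U. (-1) ^ card B * (\<Prod>u\<in>B. x u)) + (\<Sum>B\<in>insert a ` Pow U. (-1) ^ card B * (\<Prod>u\<in>B. x u))"
    unfolding Pow_insert using fin disj by (intro sum.union_disjoint) auto
  also have "(\<Sum>B\<in>insert a ` Pow U. (-1) ^ card B * (\<Prod>u\<in>B. x u))
      = (\<Sum>B\<in>Pow U. (-1) ^ card (insert a B) * (\<Prod>u\<in>insert a B. x u))"
    using inj by (simp add: sum.reindex)
  also have "\<dots> = (\<Sum>B\<in>Pow U. - x a * ((-1) ^ card B * (\<Prod>u\<in>B. x u)))"
  proof (intro sum.cong refl)
    fix B assume "B \<in> Pow U"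
    then have "a \<notin> B" "finite B" using insert finite_subset by auto
    then show "(-1) ^ card (insert a B) * (\<Prod>u\<in>insert a B. x u) = - x a * ((-1) ^ card B * (\<Prod>u\<in>B. x u))"
      by simp
  qed
  also have "(\<Sum>B\<in>Pow U. - x a * ((-1) ^ card B * (\<Prod>u\<in>B. x u))) = - x a * (\<Sum>B\<in>Pow U. (-1) ^ card B * (\<Prod>u\<in>B. x u))"
    by (simp add: sum_distrib_left)
  finally show ?case using insert by (simp add: algebra_simps)
qed

lemma one_plus_sum_le_prod:
  fixes x :: "'a \<Rightarrow> real"
  assumes "finite U" "\<And>u. u \<in> U \<Longrightarrow> 0 \<le> x u"
  shows "1 + (\<Sum>u\<in>U. x u) \<le> (\<Prod>u\<in>U. 1 + x u)"
  using assms
proof (induction U rule: finite_induct)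
  case (insert a U)
  have "0 \<le> x a" "0 \<le> (\<Sum>u\<in>U. x u)" using insert by (auto intro: sum_nonneg)
  moreover have "1 + (\<Sum>u\<in>U. x u) \<le> (\<Prod>u\<in>U. 1 + x u)" using insert by auto
  ultimately have "(1 + x a) * (1 + (\<Sum>u\<in>U. x u)) \<le> (1 + x a) * (\<Prod>u\<in>U. 1 + x u)"
    by (intro mult_left_mono) auto
  moreover have "1 + (x a + (\<Sum>u\<in>U. x u)) \<le> (1 + x a) * (1 + (\<Sum>u\<in>U. x u))"
    using \<open>0 \<le> x a\<close> \<open>0 \<le> (\<Sum>u\<in>U. x u)\<close> by (simp add: algebra_simps)
  ultimately show ?case using insert by simp
qed simp

lemma one_minus_sum_le_prod:
  fixes x :: "'a \<Rightarrow> real"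
  assumes "finite U" "\<And>u. u \<in> U \<Longrightarrow> 0 \<le> x u \<and> x u \<le> 1"
  shows "1 - (\<Sum>u\<in>U. x u) \<le> (\<Prod>u\<in>U. 1 - x u)"
  using assms
proof (induction U rule: finite_induct)
  case (insert a U)
  have "0 \<le> x a" "x a \<le> 1" "0 \<le> (\<Sum>u\<in>U. x u)" using insert by (auto intro: sum_nonneg)
  moreover have "1 - (\<Sum>u\<in>U. x u) \<le> (\<Prod>u\<in>U. 1 - x u)" using insert by auto
  ultimately have "(1 - x a) * (1 - (\<Sum>u\<in>U. x u)) \<le> (1 - x a) * (\<Prod>u\<in>U. 1 - x u)"
    by (intro mult_left_mono) auto
  moreover have "1 - (x a + (\<Sum>u\<in>U. x u)) \<le> (1 - x a) * (1 - (\<Sum>u\<in>U. x u))"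
    using \<open>0 \<le> x a\<close> \<open>0 \<le> (\<Sum>u\<in>U. x u)\<close> by (simp add: algebra_simps)
  ultimately show ?case using insert by simp
qed simp

lemma sum_Pow_card:
  fixes f :: "nat \<Rightarrow> real"
  assumes "finite U"
  shows "(\<Sum>B\<in>Pow U. f (card B)) = (\<Sum>j\<le>card U. of_nat (card U choose j) * f j)"
proof -
  have "(\<Sum>B\<in>Pow U. f (card B)) = (\<Sum>j\<le>card U. \<Sum>B\<in>{B\<in>Pow U. card B = j}. f (card B))"
    using assms by (intro sum.group[symmetric]) (auto intro: card_mono)
  also have "\<dots> = (\<Sum>j\<le>card U. of_nat (card U choose j) * f j)"
  proof (intro sum.cong refl)
    fix j
    have "{B\<in>Pow U. card B = j} = {B. B \<subseteq> U \<and> card B = j}" by auto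
    then have "card {B\<in>Pow U. card B = j} = card U choose j" using n_subsets[OF assms] by simp
    then show "(\<Sum>B\<in>{B\<in>Pow U. card B = j}. f (card B)) = of_nat (card U choose j) * f j"
      by simp
  qed
  finally show ?thesis .
qed

lemma harm_binomial:
  "(\<Sum>j<m. (-1) ^ j * of_nat (m choose (Suc j)) / of_nat (Suc j)) = (harm m :: real)"
proof (induction m)
  case 0
  then show ?case by (simp add: harm_expand)
next
  case (Suc m)
  have A: "(\<Sum>j<Suc m. (-1) ^ j * of_nat (m choose (Suc j)) / of_nat (Suc j)) = (harm m :: real)"
    using Suc by simp
  have alt: "(\<Sum>i\<le>Suc m. (-1)^i * of_nat (Suc m choose i)) = (0 :: real)"
    by (rule choose_alternating_sum) simp
  have B: "(\<Sum>j<Suc m. (-1) ^ j * of_nat (Suc m choose Suc j)) = (1::real)"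
    using alt unfolding sum.atMost_Suc_shift by (simp add: lessThan_Suc_atMost sum_negf)
  have C: "(\<Sum>j<Suc m. (-1) ^ j * of_nat (m choose j) / of_nat (Suc j))
       = (\<Sum>j<Suc m. (-1) ^ j * of_nat (Suc m choose Suc j)) / (of_nat (Suc m) :: real)"
    unfolding sum_divide_distrib
  proof (intro sum.cong refl)
    fix j
    have "of_nat (Suc m) * of_nat (m choose j) = (of_nat (Suc m choose Suc j) * of_nat (Suc j) :: real)"
      using Suc_times_binomial_eq[of m j] by (metis of_nat_mult)
    then have "of_nat (m choose j) / of_nat (Suc j) = (of_nat (Suc m choose Suc j) / of_nat (Suc m) :: real)"
      by (subst frac_eq_eq) (simp_all add: mult.commute)
    then show "(-1) ^ j * of_nat (m choose j) / of_nat (Suc j) = (-1) ^ j * of_nat (Suc m choose Suc j) / (of_nat (Suc m) :: real)"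
      by (metis times_divide_eq_right)
  qed
  have "(\<Sum>j<Suc m. (-1) ^ j * of_nat (Suc m choose (Suc j)) / of_nat (Suc j))
      = (\<Sum>j<Suc m. (-1) ^ j * of_nat (m choose (Suc j)) / of_nat (Suc j) + (-1) ^ j * of_nat (m choose j) / of_nat (Suc j) :: real)"
    by (intro sum.cong refl) (simp add: add_divide_distrib distrib_left)
  also have "\<dots> = harm m + 1 / of_nat (Suc m)"
    unfolding sum.distrib A C B ..
  also have "\<dots> = harm (Suc m)" by (simp add: harm_Suc field_simps)
  finally show ?case .
qed

lemma harm_Pow:
  assumes "finite U"
  shows "(\<Sum>B\<in>Pow U - {{}}. (-1) ^ (card B + 1) / of_nat (card B)) = (harm (card U) :: real)"
proof -
  have "(\<Sum>B\<in>Pow U - {{}}. (-1) ^ (card B + 1) / of_nat (card B))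
      = (\<Sum>B\<in>Pow U. (-1) ^ (card B + 1) / (of_nat (card B) :: real))"
    using assms by (intro sum.mono_neutral_left) auto
  also have "\<dots> = (\<Sum>j\<le>card U. of_nat (card U choose j) * ((-1) ^ (j + 1) / of_nat j))"
    using sum_Pow_card[OF assms, of "\<lambda>j. (-1) ^ (j + 1) / of_nat j"] by simp
  also have "\<dots> = (\<Sum>j<card U. of_nat (card U choose Suc j) * ((-1) ^ (Suc j + 1) / of_nat (Suc j)))"
    unfolding sum.atMost_shift by simp
  also have "\<dots> = (\<Sum>j<card U. (-1) ^ j * of_nat (card U choose (Suc j)) / of_nat (Suc j))"
    by (intro sum.cong refl) simp
  finally show ?thesis using harm_binomial by simp
qed




lemma R_bound:
  fixes b :: "'a \<Rightarrow> nat" and n :: nat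
  assumes fin: "finite S" and bn: "\<And>i. i \<in> S \<Longrightarrow> b i \<le> n" and npos: "n > 0"
    and bpos: "(\<Sum>i\<in>S. b i) \<ge> 1"
  defines "R \<equiv> (\<Prod>i\<in>S. 1 - real (b i) / real n)"
  shows "0 \<le> R" "R < 1" "real n / real (\<Sum>i\<in>S. b i) \<le> 1 / (1 - R)"
    "1 / (1 - R) \<le> real n / real (\<Sum>i\<in>S. b i) + 1"
proof -
  define x where "x i = real (b i) / real n" for i
  have x01: "0 \<le> x i \<and> x i \<le> 1" if "i \<in> S" for i
    using bn[OF that] npos by (auto simp: x_def)
  define X where "X = (\<Sum>i\<in>S. x i)"
  have X: "X = real (\<Sum>i\<in>S. b i) / real n"
    unfolding X_def x_def by (simp add: sum_divide_distrib)
  have Xpos: "X > 0" unfolding X using bpos npos by (intro divide_pos_pos) (simp_all del: of_nat_sum)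
  have R: "R = (\<Prod>i\<in>S. 1 - x i)" unfolding R_def x_def ..
  show R0: "0 \<le> R" unfolding R using x01 by (intro prod_nonneg) auto
  have low: "1 - X \<le> R" unfolding R X_def by (rule one_minus_sum_le_prod[OF fin x01])
  have P1: "1 + X \<le> (\<Prod>i\<in>S. 1 + x i)" unfolding X_def
    by (rule one_plus_sum_le_prod[OF fin]) (use x01 in auto)
  have "R * (\<Prod>i\<in>S. 1 + x i) = (\<Prod>i\<in>S. 1 - x i ^ 2)"
    unfolding R prod.distrib[symmetric] by (intro prod.cong refl) (simp add: algebra_simps power2_eq_square)
  also have "\<dots> \<le> 1"
    using x01 by (intro prod_le_1) (auto simp: power_le_one)
  finally have "R * (1 + X) \<le> 1"
    using P1 R0 by (meson dual_order.trans mult_left_mono)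
  then have up: "R \<le> 1 / (1 + X)" using Xpos by (simp add: field_simps)
  have "1 - R \<ge> X / (1 + X)"
    using up Xpos by (simp add: field_simps)
  then have omR: "1 - R > 0" using Xpos
    by (smt (verit) divide_pos_pos)
  then show "R < 1" by simp
  have "1 / X \<le> 1 / (1 - R)" using low omR Xpos by (intro divide_left_mono) auto
  then show "real n / real (\<Sum>i\<in>S. b i) \<le> 1 / (1 - R)" unfolding X by simp
  have "1 / (1 - R) \<le> 1 / (X / (1 + X))"
    using \<open>1 - R \<ge> X / (1 + X)\<close> Xpos omR by (intro divide_left_mono) (auto intro!: mult_pos_pos divide_pos_pos)
  also have "\<dots> = 1 / X + 1" using Xpos by (simp add: field_simps)
  finally show "1 / (1 - R) \<le> real n / real (\<Sum>i\<in>S. b i) + 1" unfolding X by simp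
qed




lemma prob_IE:
  fixes M :: "'a measure" and Q :: "'u \<Rightarrow> 'a \<Rightarrow> bool"
  assumes "prob_space M" "finite U" "\<And>u. u \<in> U \<Longrightarrow> {\<omega>\<in>space M. Q u \<omega>} \<in> sets M"
  shows "measure M {\<omega>\<in>space M. \<forall>u\<in>U. \<not> Q u \<omega>}
       = (\<Sum>B\<in>Pow U. (-1) ^ card B * measure M {\<omega>\<in>space M. \<forall>u\<in>B. Q u \<omega>})"
proof -
  interpret prob_space M by fact
  have setsB: "{\<omega>\<in>space M. \<forall>u\<in>B. Q u \<omega>} \<in> sets M" if "B \<in> Pow U" for B
    using that assms(3) finite_subset[OF _ assms(2)]
    by (intro sets.sets_Collect_finite_All) auto
  have setsU: "{\<omega>\<in>space M. \<forall>u\<in>U. \<not> Q u \<omega>} \<in> sets M"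
    using assms(2,3) by (intro sets.sets_Collect_finite_All sets.sets_Collect_neg) auto
  have "measure M {\<omega>\<in>space M. \<forall>u\<in>U. \<not> Q u \<omega>} = integral\<^sup>L M (indicator {\<omega>\<in>space M. \<forall>u\<in>U. \<not> Q u \<omega>})"
    by (simp add: Int_absorb2)
  also have "\<dots> = integral\<^sup>L M (\<lambda>\<omega>. \<Sum>B\<in>Pow U. (-1) ^ card B * indicator {\<omega>\<in>space M. \<forall>u\<in>B. Q u \<omega>} \<omega>)"
  proof (rule Bochner_Integration.integral_cong[OF refl])
    fix \<omega> assume \<omega>: "\<omega> \<in> space M"
    have "indicator {\<omega>\<in>space M. \<forall>u\<in>U. \<not> Q u \<omega>} \<omega> = (\<Prod>u\<in>U. 1 - (if Q u \<omega> then 1 else 0 :: real))"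
      using \<omega> assms(2) by (auto simp: indicator_def prod_zero_iff)
    also have "\<dots> = (\<Sum>B\<in>Pow U. (-1) ^ card B * (\<Prod>u\<in>B. (if Q u \<omega> then 1 else 0 :: real)))"
      by (rule prod_one_minus_expand[OF assms(2)])
    also have "\<dots> = (\<Sum>B\<in>Pow U. (-1) ^ card B * indicator {\<omega>\<in>space M. \<forall>u\<in>B. Q u \<omega>} \<omega>)"
    proof (intro sum.cong refl)
      fix B assume "B \<in> Pow U"
      then have "finite B" using assms(2) finite_subset by auto
      then show "(-1) ^ card B * (\<Prod>u\<in>B. (if Q u \<omega> then 1 else 0 :: real)) = (-1) ^ card B * indicator {\<omega>\<in>space M. \<forall>u\<in>B. Q u \<omega>} \<omega>"
        using \<omega> by (auto simp: indicator_def prod_zero_iff)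
    qed
    finally show "indicator {\<omega>\<in>space M. \<forall>u\<in>U. \<not> Q u \<omega>} \<omega> = (\<Sum>B\<in>Pow U. (-1) ^ card B * indicator {\<omega>\<in>space M. \<forall>u\<in>B. Q u \<omega>} \<omega> :: real)" .
  qed
  also have "\<dots> = (\<Sum>B\<in>Pow U. integral\<^sup>L M (\<lambda>\<omega>. (-1) ^ card B * indicator {\<omega>\<in>space M. \<forall>u\<in>B. Q u \<omega>} \<omega>))"
    using setsB by (intro Bochner_Integration.integral_sum) (auto intro!: integrable_mult_right integrable_real_indicator simp: less_top[symmetric])
  also have "\<dots> = (\<Sum>B\<in>Pow U. (-1) ^ card B * measure M {\<omega>\<in>space M. \<forall>u\<in>B. Q u \<omega>})"
    by (intro sum.cong refl) (simp add: Int_absorb2)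
  finally show ?thesis .
qed

definition unifp :: "nat \<Rightarrow> nat measure" where "unifp n = measure_pmf (pmf_of_set {..<n})"

lemma coupon_space_alt: "coupon_space n k = PiM ({..<k} \<times> UNIV) (\<lambda>_. unifp n)"
  by (simp add: coupon_space_def unifp_def)

lemma prob_space_coupon: "prob_space (coupon_space n k)"
  unfolding coupon_space_def by (intro prob_space_PiM) (simp add: measure_pmf.prob_space_axioms)

lemma space_coupon: "space (coupon_space n k) = PiE ({..<k} \<times> UNIV) (\<lambda>_. UNIV)"
  unfolding coupon_space_def by (simp add: space_PiM)

lemma rect_measure:
  assumes npos: "n > 0" and S: "S \<subseteq> {..<k}" "finite S" and A: "\<And>i. i \<in> S \<Longrightarrow> A i \<subseteq> {..<n}"
  shows "{\<omega>\<in>space (coupon_space n k). \<forall>i\<in>S. \<forall>j<t. \<omega> (i,j) \<notin> A i} \<in> sets (coupon_space n k)"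
    "measure (coupon_space n k) {\<omega>\<in>space (coupon_space n k). \<forall>i\<in>S. \<forall>j<t. \<omega> (i,j) \<notin> A i}
       = (\<Prod>i\<in>S. (1 - real (card (A i)) / real n) ^ t)"
proof -
  let ?I = "{..<k} \<times> (UNIV :: nat set)"
  let ?J = "S \<times> {..<t}"
  let ?X = "\<lambda>ij. UNIV - A (fst ij)"
  have eq: "{\<omega>\<in>space (coupon_space n k). \<forall>i\<in>S. \<forall>j<t. \<omega> (i,j) \<notin> A i}
     = prod_emb ?I (\<lambda>_. unifp n) ?J (PiE ?J ?X)"
    unfolding coupon_space_alt by (auto simp: prod_emb_def space_PiM unifp_def PiE_iff extensional_def)
  have JI: "?J \<subseteq> ?I" using S by auto
  have fJ: "finite ?J" using S by auto
  show "{\<omega>\<in>space (coupon_space n k). \<forall>i\<in>S. \<forall>j<t. \<omega> (i,j) \<notin> A i} \<in> sets (coupon_space n k)"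
    unfolding eq unfolding coupon_space_alt using JI fJ by (intro sets_PiM_I) (auto simp: unifp_def)
  have "emeasure (coupon_space n k) {\<omega>\<in>space (coupon_space n k). \<forall>i\<in>S. \<forall>j<t. \<omega> (i,j) \<notin> A i}
      = (\<Prod>ij\<in>?J. emeasure (unifp n) (?X ij))"
    unfolding eq unfolding coupon_space_alt using JI fJ
    by (intro emeasure_PiM_emb) (auto simp: unifp_def measure_pmf.prob_space_axioms)
  also have "\<dots> = (\<Prod>ij\<in>?J. ennreal (1 - real (card (A (fst ij))) / real n))"
  proof (intro prod.cong refl)
    fix ij assume "ij \<in> ?J"
    then have "fst ij \<in> S" by auto
    then have Ai: "A (fst ij) \<subseteq> {..<n}" by (rule A)
    have cle: "card (A (fst ij)) \<le> n" using card_mono[OF _ Ai] by simp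
    have "{..<n} \<inter> (UNIV - A (fst ij)) = {..<n} - A (fst ij)" by auto
    then have "measure (unifp n) (?X ij) = real (card ({..<n} - A (fst ij))) / real n"
      using npos unfolding unifp_def by (subst measure_pmf_of_set) auto
    also have "\<dots> = 1 - real (card (A (fst ij))) / real n"
      using Ai npos finite_subset[OF Ai] cle by (simp add: card_Diff_subset of_nat_diff field_simps)
    finally show "emeasure (unifp n) (?X ij) = ennreal (1 - real (card (A (fst ij))) / real n)"
      unfolding unifp_def by (simp add: measure_pmf.emeasure_eq_measure)
  qed
  also have "\<dots> = ennreal (\<Prod>ij\<in>?J. 1 - real (card (A (fst ij))) / real n)"
  proof (rule prod_ennreal)
    fix ij assume "ij \<in> ?J"
    then have "fst ij \<in> S" by auto
    then have Ai: "A (fst ij) \<subseteq> {..<n}" by (rule A)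
    then have "card (A (fst ij)) \<le> n" using card_mono[OF _ Ai] by simp
    then show "0 \<le> 1 - real (card (A (fst ij))) / real n" using npos by (simp add: field_simps)
  qed
  also have "(\<Prod>ij\<in>?J. 1 - real (card (A (fst ij))) / real n) = (\<Prod>i\<in>S. (1 - real (card (A i)) / real n) ^ t)"
  proof -
    let ?f = "\<lambda>i. 1 - real (card (A i)) / real n"
    have "(\<Prod>i\<in>S. (?f i) ^ t) = (\<Prod>i\<in>S. \<Prod>j\<in>{..<t}. ?f i)" by simp
    also have "\<dots> = (\<Prod>(i,j)\<in>S \<times> {..<t}. ?f i)" by (rule prod.cartesian_product)
    also have "\<dots> = (\<Prod>ij\<in>S \<times> {..<t}. ?f (fst ij))" by (simp add: case_prod_beta)
    finally show ?thesis by simp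
  qed
  finally have "emeasure (coupon_space n k) {\<omega>\<in>space (coupon_space n k). \<forall>i\<in>S. \<forall>j<t. \<omega> (i,j) \<notin> A i}
       = ennreal (\<Prod>i\<in>S. (1 - real (card (A i)) / real n) ^ t)" (is "_ = ennreal ?v") .
  note em = this
  show "measure (coupon_space n k) {\<omega>\<in>space (coupon_space n k). \<forall>i\<in>S. \<forall>j<t. \<omega> (i,j) \<notin> A i}
       = (\<Prod>i\<in>S. (1 - real (card (A i)) / real n) ^ t)"
  proof -
    have "0 \<le> (\<Prod>i\<in>S. (1 - real (card (A i)) / real n) ^ t)"
    proof (intro prod_nonneg zero_le_power)
      fix i assume "i \<in> S"
      then have "card (A i) \<le> n" using card_mono[OF _ A] by fastforce
      then show "0 \<le> 1 - real (card (A i)) / real n" using npos by (simp add: field_simps)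
    qed
    then show ?thesis using em unfolding measure_def by simp
  qed
qed




definition cmp :: "(nat \<Rightarrow> nat set) \<Rightarrow> nat \<Rightarrow> nat \<Rightarrow> (nat \<times> nat \<Rightarrow> nat) \<Rightarrow> bool" where
  "cmp miss i t \<omega> = (\<forall>c\<in>miss i. \<exists>j<t. \<omega> (i,j) = c)"

definition Rf :: "nat \<Rightarrow> nat set \<Rightarrow> (nat \<times> nat) set \<Rightarrow> real" where
  "Rf n S B = (\<Prod>i\<in>S. 1 - real (card (B `` {i})) / real n)"

lemma card_Sigma_Image:
  assumes "finite S" "B \<subseteq> Sigma S miss" "\<And>i. i \<in> S \<Longrightarrow> finite (miss i)"
  shows "card B = (\<Sum>i\<in>S. card (B `` {i}))"
proof -
  have "B = Sigma S (\<lambda>i. B `` {i})" using assms(2) by auto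
  moreover have "finite (B `` {i})" if "i \<in> S" for i
    using assms(2,3) that by (meson Image_singleton_iff SigmaD2 finite_subset subsetI subset_iff)
  ultimately show ?thesis using assms(1) by (metis card_SigmaI)
qed

lemma F_formula:
  assumes npos: "n > 0" and S: "S \<subseteq> {..<k}" and miss: "\<And>i. i \<in> S \<Longrightarrow> miss i \<subseteq> {..<n}"
  shows "measure (coupon_space n k) {\<omega>\<in>space (coupon_space n k). \<forall>i\<in>S. cmp miss i t \<omega>}
       = (\<Sum>B\<in>Pow (Sigma S miss). (-1) ^ card B * Rf n S B ^ t)"
proof -
  let ?P = "coupon_space n k"
  have fS: "finite S" using S finite_subset by blast
  have fU: "finite (Sigma S miss)" using fS miss by (meson finite_SigmaI finite_lessThan finite_subset)
  define Q where "Q u \<omega> = (\<forall>j<t. \<omega> (fst u, j) \<noteq> snd u)" for u :: "nat \<times> nat" and \<omega> :: "nat \<times> nat \<Rightarrow> nat"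
  have "{\<omega>\<in>space ?P. \<forall>i\<in>S. cmp miss i t \<omega>} = {\<omega>\<in>space ?P. \<forall>u\<in>Sigma S miss. \<not> Q u \<omega>}"
    by (auto simp: cmp_def Q_def)
  also have "measure ?P \<dots> = (\<Sum>B\<in>Pow (Sigma S miss). (-1) ^ card B * measure ?P {\<omega>\<in>space ?P. \<forall>u\<in>B. Q u \<omega>})"
  proof (rule prob_IE[OF prob_space_coupon fU])
    fix u assume u: "u \<in> Sigma S miss"
    have "{\<omega>\<in>space ?P. Q u \<omega>} = {\<omega>\<in>space ?P. \<forall>i\<in>{fst u}. \<forall>j<t. \<omega> (i,j) \<notin> {snd u}}"
      by (auto simp: Q_def)
    also have "\<dots> \<in> sets ?P"
    proof -
      have "fst u \<in> S" "snd u \<in> miss (fst u)" using u by auto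
      then have "fst u < k" "snd u < n" using S miss by auto
      then show ?thesis by (intro rect_measure(1)[OF npos]) simp_all
    qed
    finally show "{\<omega>\<in>space ?P. Q u \<omega>} \<in> sets ?P" .
  qed
  also have "\<dots> = (\<Sum>B\<in>Pow (Sigma S miss). (-1) ^ card B * Rf n S B ^ t)"
  proof (intro sum.cong refl arg_cong2[where f = "(*)"])
    fix B assume B: "B \<in> Pow (Sigma S miss)"
    have "{\<omega>\<in>space ?P. \<forall>u\<in>B. Q u \<omega>} = {\<omega>\<in>space ?P. \<forall>i\<in>S. \<forall>j<t. \<omega> (i,j) \<notin> B `` {i}}"
      using B apply (auto simp: Q_def)
       apply (metis fst_conv snd_conv)
      by blast
    also have "measure ?P \<dots> = (\<Prod>i\<in>S. (1 - real (card (B `` {i})) / real n) ^ t)"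
      using B miss by (intro rect_measure(2)[OF npos S fS]) auto
    also have "\<dots> = Rf n S B ^ t" unfolding Rf_def by (simp add: prod_power_distrib)
    finally show "measure ?P {\<omega>\<in>space ?P. \<forall>u\<in>B. Q u \<omega>} = Rf n S B ^ t" .
  qed
  finally show ?thesis .
qed

lemma sets_cmp_all:
  assumes npos: "n > 0" and S: "S \<subseteq> {..<k}" and miss: "\<And>i. i \<in> S \<Longrightarrow> miss i \<subseteq> {..<n}"
  shows "{\<omega>\<in>space (coupon_space n k). \<forall>i\<in>S. cmp miss i t \<omega>} \<in> sets (coupon_space n k)"
proof -
  let ?X = "{\<omega>\<in>space (coupon_space n k). \<forall>i\<in>S. cmp miss i t \<omega>}"
  have "measure (coupon_space n k) ?X = (\<Sum>B\<in>Pow (Sigma S miss). (-1) ^ card B * Rf n S B ^ t)"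
    by (rule F_formula[OF assms])
  define Q where "Q u \<omega> = (\<forall>j<t. \<omega> (fst u, j) \<noteq> snd u)" for u :: "nat \<times> nat" and \<omega> :: "nat \<times> nat \<Rightarrow> nat"
  have fS: "finite S" using S finite_subset by blast
  have fU: "finite (Sigma S miss)" using fS miss by (meson finite_SigmaI finite_lessThan finite_subset)
  have "?X = {\<omega>\<in>space (coupon_space n k). \<forall>u\<in>Sigma S miss. \<not> Q u \<omega>}"
    by (auto simp: cmp_def Q_def)
  also have "\<dots> \<in> sets (coupon_space n k)"
  proof (intro sets.sets_Collect_finite_All sets.sets_Collect_neg fU)
    fix u assume u: "u \<in> Sigma S miss"
    have "{\<omega>\<in>space (coupon_space n k). Q u \<omega>} = {\<omega>\<in>space (coupon_space n k). \<forall>i\<in>{fst u}. \<forall>j<t. \<omega> (i,j) \<notin> {snd u}}"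
      by (auto simp: Q_def)
    also have "\<dots> \<in> sets (coupon_space n k)"
    proof -
      have "fst u \<in> S" "snd u \<in> miss (fst u)" using u by auto
      then have "fst u < k" "snd u < n" using S miss by auto
      then show ?thesis by (intro rect_measure(1)[OF npos]) simp_all
    qed
    finally show "{\<omega>\<in>space (coupon_space n k). Q u \<omega>} \<in> sets (coupon_space n k)" .
  qed
  finally show ?thesis .
qed

lemma Rf_props:
  assumes npos: "n > 0" and fS: "finite S" and miss: "\<And>i. i \<in> S \<Longrightarrow> miss i \<subseteq> {..<n}"
    and B: "B \<subseteq> Sigma S miss" "B \<noteq> {}"
  shows "0 \<le> Rf n S B" "Rf n S B < 1"
    "real n / real (card B) \<le> 1 / (1 - Rf n S B)"
    "1 / (1 - Rf n S B) \<le> real n / real (card B) + 1"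
proof -
  have fm: "\<And>i. i \<in> S \<Longrightarrow> finite (miss i)" using miss finite_subset by blast
  have cB: "card B = (\<Sum>i\<in>S. card (B `` {i}))" by (rule card_Sigma_Image[OF fS B(1) fm])
  have fU: "finite (Sigma S miss)" using fS fm by blast
  have "card B \<ge> 1" using B fU finite_subset by (metis One_nat_def Suc_leI card_gt_0_iff)
  then have b1: "(\<Sum>i\<in>S. card (B `` {i})) \<ge> 1" using cB by simp
  have bn: "card (B `` {i}) \<le> n" if "i \<in> S" for i
  proof -
    have "B `` {i} \<subseteq> {..<n}" using B(1) miss that by auto
    then show ?thesis using card_mono[of "{..<n}"] by fastforce
  qed
  note RB = R_bound[OF fS bn npos b1]
  show "0 \<le> Rf n S B" "Rf n S B < 1" using RB(1,2) unfolding Rf_def by auto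
  show "real n / real (card B) \<le> 1 / (1 - Rf n S B)"
    "1 / (1 - Rf n S B) \<le> real n / real (card B) + 1"
    using RB(3,4) unfolding Rf_def cB by auto
qed

lemma Rf_empty: "Rf n S {} = 1"
  by (simp add: Rf_def)

lemma tail_formula:
  assumes npos: "n > 0" and S: "S \<subseteq> {..<k}" and miss: "\<And>i. i \<in> S \<Longrightarrow> miss i \<subseteq> {..<n}"
  shows "1 - measure (coupon_space n k) {\<omega>\<in>space (coupon_space n k). \<forall>i\<in>S. cmp miss i t \<omega>}
       = (\<Sum>B\<in>Pow (Sigma S miss) - {{}}. (-1) ^ (card B + 1) * Rf n S B ^ t)"
proof -
  have fS: "finite S" using S finite_subset by blast
  have fU: "finite (Sigma S miss)" using fS miss by (meson finite_SigmaI finite_lessThan finite_subset)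
  have "(\<Sum>B\<in>Pow (Sigma S miss). (-1) ^ card B * Rf n S B ^ t)
     = (-1) ^ card {} * Rf n S {} ^ t + (\<Sum>B\<in>Pow (Sigma S miss) - {{}}. (-1) ^ card B * Rf n S B ^ t)"
    using fU by (subst sum.remove[of _ "{}"]) auto
  moreover have F: "measure (coupon_space n k) {\<omega>\<in>space (coupon_space n k). \<forall>i\<in>S. cmp miss i t \<omega>}
       = (\<Sum>B\<in>Pow (Sigma S miss). (-1) ^ card B * Rf n S B ^ t)" by (rule F_formula[OF assms])
  ultimately show ?thesis unfolding Rf_empty
    by (simp add: sum_negf[symmetric])
qed

lemma tail_sums:
  assumes npos: "n > 0" and S: "S \<subseteq> {..<k}" and miss: "\<And>i. i \<in> S \<Longrightarrow> miss i \<subseteq> {..<n}"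
  shows "(\<lambda>t. 1 - measure (coupon_space n k) {\<omega>\<in>space (coupon_space n k). \<forall>i\<in>S. cmp miss i t \<omega>})
     sums (\<Sum>B\<in>Pow (Sigma S miss) - {{}}. (-1) ^ (card B + 1) * (1 / (1 - Rf n S B)))"
proof -
  have tf: "\<And>t. 1 - measure (coupon_space n k) {\<omega>\<in>space (coupon_space n k). \<forall>i\<in>S. cmp miss i t \<omega>}
       = (\<Sum>B\<in>Pow (Sigma S miss) - {{}}. (-1) ^ (card B + 1) * Rf n S B ^ t)"
    by (rule tail_formula[OF assms])
  show ?thesis
  unfolding tf
proof (intro sums_sum sums_mult)
  have fS: "finite S" using S finite_subset by blast
  fix B assume B: "B \<in> Pow (Sigma S miss) - {{}}"
  then have "0 \<le> Rf n S B" "Rf n S B < 1" using Rf_props[OF npos fS miss] by auto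
  then show "(\<lambda>t. Rf n S B ^ t) sums (1 / (1 - Rf n S B))"
    by (intro geometric_sums) auto
qed
qed




lemma expectation_nat:
  fixes Y :: "'a \<Rightarrow> nat"
  assumes "prob_space M" "Y \<in> measurable M (count_space UNIV)"
    and "(\<lambda>t. measure M {\<omega>\<in>space M. t < Y \<omega>}) sums s"
  shows "integrable M (\<lambda>\<omega>. real (Y \<omega>))" "integral\<^sup>L M (\<lambda>\<omega>. real (Y \<omega>)) = s"
proof -
  interpret prob_space M by fact
  have meas: "(\<lambda>\<omega>. real (Y \<omega>)) \<in> borel_measurable M"
    by (rule measurable_compose[OF assms(2)]) simp
  have s0: "0 \<le> s"
  proof -
    have sm: "summable (\<lambda>t. measure M {\<omega>\<in>space M. t < Y \<omega>})" using assms(3) by (rule sums_summable)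
    have "0 \<le> (\<Sum>t. measure M {\<omega>\<in>space M. t < Y \<omega>})" by (rule suminf_nonneg[OF sm]) simp
    then show ?thesis using assms(3) by (simp add: sums_iff)
  qed
  have "(\<integral>\<^sup>+\<omega>. ennreal (real (Y \<omega>)) \<partial>M) = (\<integral>\<^sup>+\<omega>. of_nat (Y \<omega>) \<partial>M)"
    by (simp add: ennreal_of_nat_eq_real_of_nat)
  also have "\<dots> = (\<Sum>t. emeasure M {\<omega>\<in>space M. t < Y \<omega>})"
    by (rule nn_integral_nat_function[OF assms(2)])
  also have "\<dots> = (\<Sum>t. ennreal (measure M {\<omega>\<in>space M. t < Y \<omega>}))"
    by (simp add: emeasure_eq_measure)
  also have "\<dots> = ennreal s"
    using assms(3) by (subst suminf_ennreal2) (auto simp: sums_iff)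
  finally have nn: "(\<integral>\<^sup>+\<omega>. ennreal (real (Y \<omega>)) \<partial>M) = ennreal s" .
  show "integrable M (\<lambda>\<omega>. real (Y \<omega>))"
    using meas nn by (intro integrableI_nonneg) auto
  show "integral\<^sup>L M (\<lambda>\<omega>. real (Y \<omega>)) = s"
    using meas nn s0 by (subst integral_eq_nn_integral) auto
qed

lemma sum_Pow_sign_zero:
  assumes "finite K" "K \<noteq> {}"
  shows "(\<Sum>S\<in>Pow K. (-1) ^ card S) = (0::real)"
proof -
  have "(\<Prod>u\<in>K. 1 - (1::real)) = (\<Sum>B\<in>Pow K. (-1) ^ card B * (\<Prod>u\<in>B. 1))"
    by (rule prod_one_minus_expand[OF assms(1)])
  moreover have "(\<Prod>u\<in>K. 1 - (1::real)) = 0" using assms by (simp add: card_gt_0_iff)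
  ultimately show ?thesis by simp
qed

lemma Max_img_eq_iff:
  assumes "finite S" "S \<noteq> {}"
  shows "Max (f ` S) = (m::nat) \<longleftrightarrow> (\<exists>i\<in>S. f i \<in> {m}) \<and> (\<forall>i\<in>S. f i \<in> {..m})"
  using assms by (subst Max_eq_iff) auto

lemma Min_img_eq_iff:
  assumes "finite S" "S \<noteq> {}"
  shows "Min (f ` S) = (m::nat) \<longleftrightarrow> (\<exists>i\<in>S. f i \<in> {m}) \<and> (\<forall>i\<in>S. f i \<in> {m..})"
  using assms by (subst Min_eq_iff) auto

definition ptn :: "(nat \<Rightarrow> nat set) \<Rightarrow> nat \<Rightarrow> (nat \<times> nat \<Rightarrow> nat) \<Rightarrow> nat" where
  "ptn miss i \<omega> = (if \<exists>t. cmp miss i t \<omega> then LEAST t. cmp miss i t \<omega> else 0)"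

lemma cmp_mono: "cmp miss i t \<omega> \<Longrightarrow> t \<le> t' \<Longrightarrow> cmp miss i t' \<omega>"
  unfolding cmp_def by (meson less_le_trans)

lemma less_ptn_iff: "t < ptn miss i \<omega> \<longleftrightarrow> (\<exists>t'. cmp miss i t' \<omega>) \<and> \<not> cmp miss i t \<omega>"
proof (cases "\<exists>t'. cmp miss i t' \<omega>")
  case True
  let ?L = "LEAST t. cmp miss i t \<omega>"
  have L: "cmp miss i ?L \<omega>" using True by (rule LeastI_ex)
  have "t < ?L \<longleftrightarrow> \<not> cmp miss i t \<omega>"
  proof
    assume "t < ?L" then show "\<not> cmp miss i t \<omega>" using not_less_Least by blast
  next
    assume "\<not> cmp miss i t \<omega>" then show "t < ?L"
      using cmp_mono[OF L, of t] by (meson not_le_imp_less)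
  qed
  then show ?thesis using True by (simp add: ptn_def)
qed (simp add: ptn_def)

lemma player_time_ptn:
  "player_time n C i \<omega> = real (ptn (\<lambda>i. {..<n} - C i) i \<omega>)"
proof -
  have eq: "({..<n} \<subseteq> C i \<union> (\<lambda>j. \<omega> (i, j)) ` {..<t}) \<longleftrightarrow> cmp (\<lambda>i. {..<n} - C i) i t \<omega>" for t
    unfolding cmp_def
  proof
    assume a: "{..<n} \<subseteq> C i \<union> (\<lambda>j. \<omega> (i, j)) ` {..<t}"
    show "\<forall>c\<in>{..<n} - C i. \<exists>j<t. \<omega> (i, j) = c"
    proof
      fix c assume "c \<in> {..<n} - C i"
      then have "c \<in> (\<lambda>j. \<omega> (i, j)) ` {..<t}" using a by blast
      then show "\<exists>j<t. \<omega> (i, j) = c" by auto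
    qed
  next
    assume b: "\<forall>c\<in>{..<n} - C i. \<exists>j<t. \<omega> (i, j) = c"
    show "{..<n} \<subseteq> C i \<union> (\<lambda>j. \<omega> (i, j)) ` {..<t}"
    proof
      fix x assume x: "x \<in> {..<n}"
      show "x \<in> C i \<union> (\<lambda>j. \<omega> (i, j)) ` {..<t}"
      proof (cases "x \<in> C i")
        case False
        then obtain j where "j < t" "\<omega> (i, j) = x" using b x by blast
        then show ?thesis by force
      qed simp
    qed
  qed
  show ?thesis unfolding player_time_def collect_time_def ptn_def eq by simp
qed

context
  fixes n k :: nat and miss :: "nat \<Rightarrow> nat set"
  assumes npos: "n > 0" and miss: "\<And>i. i < k \<Longrightarrow> miss i \<subseteq> {..<n}"
begin

lemma sets_cmp1: "i < k \<Longrightarrow> {\<omega>\<in>space (coupon_space n k). cmp miss i t \<omega>} \<in> sets (coupon_space n k)"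
  using sets_cmp_all[OF npos, of "{i}" k miss t] miss by auto

lemma ptn_measurable:
  assumes i: "i < k"
  shows "ptn miss i \<in> measurable (coupon_space n k) (count_space UNIV)"
  unfolding ptn_def
proof (intro measurable_If measurable_Least measurable_const)
  show "0 \<in> space (count_space UNIV)" by simp
  show "(\<lambda>x. cmp miss i t x) \<in> measurable (coupon_space n k) (count_space UNIV)" for t
    using sets_cmp1[OF i] by (simp add: pred_def[symmetric])
  show "{x \<in> space (coupon_space n k). \<exists>t. cmp miss i t x} \<in> sets (coupon_space n k)"
    using sets_cmp1[OF i] by (intro sets.sets_Collect_countable_Ex) auto
qed

lemma tail_sums': 
  assumes "S \<subseteq> {..<k}"
  shows "(\<lambda>t. 1 - measure (coupon_space n k) {\<omega>\<in>space (coupon_space n k). \<forall>i\<in>S. cmp miss i t \<omega>})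
     sums (\<Sum>B\<in>Pow (Sigma S miss) - {{}}. (-1) ^ (card B + 1) * (1 / (1 - Rf n S B)))"
  using assms miss by (intro tail_sums[OF npos]) auto

lemma AE_complete: "i < k \<Longrightarrow> AE \<omega> in coupon_space n k. \<exists>t. cmp miss i t \<omega>"
proof -
  assume i: "i < k"
  interpret P: prob_space "coupon_space n k" by (rule prob_space_coupon)
  let ?N = "{\<omega>\<in>space (coupon_space n k). \<not> (\<exists>t. cmp miss i t \<omega>)}"
  have N: "?N \<in> sets (coupon_space n k)"
    using sets_cmp1[OF i] by (intro sets.sets_Collect_neg sets.sets_Collect_countable_Ex) auto
  have sm: "summable (\<lambda>t. 1 - measure (coupon_space n k) {\<omega>\<in>space (coupon_space n k). \<forall>i'\<in>{i}. cmp miss i' t \<omega>})"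
    by (rule sums_summable[OF tail_sums'[of "{i}"]]) (use i in simp)
  have lim: "(\<lambda>t. 1 - measure (coupon_space n k) {\<omega>\<in>space (coupon_space n k). cmp miss i t \<omega>}) \<longlonglongrightarrow> 0"
    using summable_LIMSEQ_zero[OF sm] by simp
  have le: "measure (coupon_space n k) ?N \<le> 1 - measure (coupon_space n k) {\<omega>\<in>space (coupon_space n k). cmp miss i t \<omega>}" for t
  proof -
    have "?N \<subseteq> space (coupon_space n k) - {\<omega>\<in>space (coupon_space n k). cmp miss i t \<omega>}" by auto
    then have "measure (coupon_space n k) ?N \<le> measure (coupon_space n k) (space (coupon_space n k) - {\<omega>\<in>space (coupon_space n k). cmp miss i t \<omega>})"
      using sets_cmp1[OF i] by (intro P.finite_measure_mono) auto
    also have "\<dots> = 1 - measure (coupon_space n k) {\<omega>\<in>space (coupon_space n k). cmp miss i t \<omega>}"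
      using sets_cmp1[OF i] by (simp add: P.prob_compl)
    finally show ?thesis .
  qed
  have "measure (coupon_space n k) ?N \<le> 0"
    using lim le by (intro LIMSEQ_le_const) auto
  then have "measure (coupon_space n k) ?N = 0" by (simp add: measure_le_0_iff)
  then have "emeasure (coupon_space n k) ?N = 0" by (simp add: P.emeasure_eq_measure)
  moreover have "(AE \<omega> in coupon_space n k. \<exists>t. cmp miss i t \<omega>) \<longleftrightarrow> emeasure (coupon_space n k) ?N = 0"
    by (rule AE_iff_measurable[OF N]) simp
  ultimately show ?thesis by simp
qed

lemma ptn_sets:
  assumes "i < k"
  shows "{\<omega>\<in>space (coupon_space n k). ptn miss i \<omega> \<in> A} \<in> sets (coupon_space n k)"
proof -
  have "{\<omega>\<in>space (coupon_space n k). ptn miss i \<omega> \<in> A} = ptn miss i -` A \<inter> space (coupon_space n k)" by auto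
  also have "\<dots> \<in> sets (coupon_space n k)"
    by (rule measurable_sets[OF ptn_measurable[OF assms]]) simp
  finally show ?thesis .
qed

lemma Max_measurable:
  assumes fS: "finite S" and S: "S \<subseteq> {..<k}" "S \<noteq> {}"
  shows "(\<lambda>\<omega>. Max ((\<lambda>i. ptn miss i \<omega>) ` S)) \<in> measurable (coupon_space n k) (count_space UNIV)"
  unfolding measurable_count_space_eq2_countable
proof safe
  fix m :: nat
  have "(\<lambda>\<omega>. Max ((\<lambda>i. ptn miss i \<omega>) ` S)) -` {m} \<inter> space (coupon_space n k)
    = {\<omega>\<in>space (coupon_space n k). Max ((\<lambda>i. ptn miss i \<omega>) ` S) = m}" by auto
  also have "\<dots> = {\<omega>\<in>space (coupon_space n k). (\<exists>i\<in>S. ptn miss i \<omega> \<in> {m}) \<and> (\<forall>i\<in>S. ptn miss i \<omega> \<in> {..m})}"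
    using Max_img_eq_iff[OF fS S(2)] by simp
  also have "\<dots> \<in> sets (coupon_space n k)"
  proof (rule sets.sets_Collect_conj)
    show "{\<omega>\<in>space (coupon_space n k). \<exists>i\<in>S. ptn miss i \<omega> \<in> {m}} \<in> sets (coupon_space n k)"
    proof (rule sets.sets_Collect_finite_Ex[OF _ fS])
      fix i assume "i \<in> S" then have "i < k" using S by blast
      then show "{\<omega>\<in>space (coupon_space n k). ptn miss i \<omega> \<in> {m}} \<in> sets (coupon_space n k)" by (rule ptn_sets)
    qed
    show "{\<omega>\<in>space (coupon_space n k). \<forall>i\<in>S. ptn miss i \<omega> \<in> {..m}} \<in> sets (coupon_space n k)"
    proof (rule sets.sets_Collect_finite_All[OF _ fS])
      fix i assume "i \<in> S" then have "i < k" using S by blast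
      then show "{\<omega>\<in>space (coupon_space n k). ptn miss i \<omega> \<in> {..m}} \<in> sets (coupon_space n k)" by (rule ptn_sets)
    qed
  qed
  finally show "(\<lambda>\<omega>. Max ((\<lambda>i. ptn miss i \<omega>) ` S)) -` {m} \<inter> space (coupon_space n k) \<in> sets (coupon_space n k)" .
qed simp

lemma Min_measurable:
  assumes fS: "finite S" and S: "S \<subseteq> {..<k}" "S \<noteq> {}"
  shows "(\<lambda>\<omega>. Min ((\<lambda>i. ptn miss i \<omega>) ` S)) \<in> measurable (coupon_space n k) (count_space UNIV)"
  unfolding measurable_count_space_eq2_countable
proof safe
  fix m :: nat
  have "(\<lambda>\<omega>. Min ((\<lambda>i. ptn miss i \<omega>) ` S)) -` {m} \<inter> space (coupon_space n k)
    = {\<omega>\<in>space (coupon_space n k). Min ((\<lambda>i. ptn miss i \<omega>) ` S) = m}" by auto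
  also have "\<dots> = {\<omega>\<in>space (coupon_space n k). (\<exists>i\<in>S. ptn miss i \<omega> \<in> {m}) \<and> (\<forall>i\<in>S. ptn miss i \<omega> \<in> {m..})}"
    using Min_img_eq_iff[OF fS S(2)] by simp
  also have "\<dots> \<in> sets (coupon_space n k)"
  proof (rule sets.sets_Collect_conj)
    show "{\<omega>\<in>space (coupon_space n k). \<exists>i\<in>S. ptn miss i \<omega> \<in> {m}} \<in> sets (coupon_space n k)"
    proof (rule sets.sets_Collect_finite_Ex[OF _ fS])
      fix i assume "i \<in> S" then have "i < k" using S by blast
      then show "{\<omega>\<in>space (coupon_space n k). ptn miss i \<omega> \<in> {m}} \<in> sets (coupon_space n k)" by (rule ptn_sets)
    qed
    show "{\<omega>\<in>space (coupon_space n k). \<forall>i\<in>S. ptn miss i \<omega> \<in> {m..}} \<in> sets (coupon_space n k)"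
    proof (rule sets.sets_Collect_finite_All[OF _ fS])
      fix i assume "i \<in> S" then have "i < k" using S by blast
      then show "{\<omega>\<in>space (coupon_space n k). ptn miss i \<omega> \<in> {m..}} \<in> sets (coupon_space n k)" by (rule ptn_sets)
    qed
  qed
  finally show "(\<lambda>\<omega>. Min ((\<lambda>i. ptn miss i \<omega>) ` S)) -` {m} \<inter> space (coupon_space n k) \<in> sets (coupon_space n k)" .
qed simp

lemma M_formula:
  assumes S: "S \<subseteq> {..<k}" "S \<noteq> {}"
  shows "(\<lambda>t. 1 - measure (coupon_space n k) {\<omega>\<in>space (coupon_space n k). \<forall>i\<in>S. cmp miss i t \<omega>})
     sums integral\<^sup>L (coupon_space n k) (\<lambda>\<omega>. real (Max ((\<lambda>i. ptn miss i \<omega>) ` S)))"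
    "integrable (coupon_space n k) (\<lambda>\<omega>. real (Max ((\<lambda>i. ptn miss i \<omega>) ` S)))"
proof -
  interpret P: prob_space "coupon_space n k" by (rule prob_space_coupon)
  have fS: "finite S" using S finite_subset by blast
  let ?Y = "\<lambda>\<omega>. Max ((\<lambda>i. ptn miss i \<omega>) ` S)"
  have Ym: "?Y \<in> measurable (coupon_space n k) (count_space UNIV)"
    by (rule Max_measurable[OF fS S])
  have "measure (coupon_space n k) {\<omega>\<in>space (coupon_space n k). t < ?Y \<omega>}
     = 1 - measure (coupon_space n k) {\<omega>\<in>space (coupon_space n k). \<forall>i\<in>S. cmp miss i t \<omega>}" for t
  proof -
    have sA: "{\<omega>\<in>space (coupon_space n k). \<forall>i\<in>S. cmp miss i t \<omega>} \<in> sets (coupon_space n k)"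
      by (rule sets_cmp_all[OF npos S(1)]) (use miss S in blast)
    have "measure (coupon_space n k) {\<omega>\<in>space (coupon_space n k). t < ?Y \<omega>}
        = measure (coupon_space n k) (space (coupon_space n k) - {\<omega>\<in>space (coupon_space n k). \<forall>i\<in>S. cmp miss i t \<omega>})"
    proof (rule measure_eq_AE)
      have "AE \<omega> in coupon_space n k. \<forall>i\<in>S. \<exists>t. cmp miss i t \<omega>"
      proof (rule AE_finite_allI[OF fS])
        fix i assume "i \<in> S" then have "i < k" using S by blast
        then show "AE \<omega> in coupon_space n k. \<exists>t. cmp miss i t \<omega>" by (rule AE_complete)
      qed
      then show "AE \<omega> in coupon_space n k. (\<omega> \<in> {\<omega>\<in>space (coupon_space n k). t < ?Y \<omega>}) =
          (\<omega> \<in> space (coupon_space n k) - {\<omega>\<in>space (coupon_space n k). \<forall>i\<in>S. cmp miss i t \<omega>})"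
      proof (eventually_elim)
        fix \<omega> assume ev: "\<forall>i\<in>S. \<exists>t. cmp miss i t \<omega>"
        have "t < ?Y \<omega> \<longleftrightarrow> (\<exists>i\<in>S. t < ptn miss i \<omega>)"
          using Max_gr_iff[of "(\<lambda>i. ptn miss i \<omega>) ` S" t] fS S(2) by simp
        also have "\<dots> \<longleftrightarrow> (\<exists>i\<in>S. \<not> cmp miss i t \<omega>)"
          using ev less_ptn_iff by blast
        finally show "(\<omega> \<in> {\<omega>\<in>space (coupon_space n k). t < ?Y \<omega>}) =
          (\<omega> \<in> space (coupon_space n k) - {\<omega>\<in>space (coupon_space n k). \<forall>i\<in>S. cmp miss i t \<omega>})"
          by blast
      qed
      show "{\<omega>\<in>space (coupon_space n k). t < ?Y \<omega>} \<in> sets (coupon_space n k)"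
      proof -
        have "{\<omega>\<in>space (coupon_space n k). t < ?Y \<omega>} = ?Y -` {t<..} \<inter> space (coupon_space n k)" by auto
        also have "\<dots> \<in> sets (coupon_space n k)" by (rule measurable_sets[OF Ym]) simp
        finally show ?thesis .
      qed
      show "space (coupon_space n k) - {\<omega>\<in>space (coupon_space n k). \<forall>i\<in>S. cmp miss i t \<omega>} \<in> sets (coupon_space n k)"
        using sA by (rule sets.compl_sets)
    qed
    also have "\<dots> = 1 - measure (coupon_space n k) {\<omega>\<in>space (coupon_space n k). \<forall>i\<in>S. cmp miss i t \<omega>}"
      using sA by (simp add: P.prob_compl)
    finally show ?thesis .
  qed
  then have sums: "(\<lambda>t. measure (coupon_space n k) {\<omega>\<in>space (coupon_space n k). t < ?Y \<omega>})
     sums (\<Sum>B\<in>Pow (Sigma S miss) - {{}}. (-1) ^ (card B + 1) * (1 / (1 - Rf n S B)))"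
    using tail_sums'[OF S(1)] by simp
  note E = expectation_nat[OF prob_space_coupon Ym sums]
  show "integrable (coupon_space n k) (\<lambda>\<omega>. real (?Y \<omega>))" by (rule E(1))
  show "(\<lambda>t. 1 - measure (coupon_space n k) {\<omega>\<in>space (coupon_space n k). \<forall>i\<in>S. cmp miss i t \<omega>})
     sums integral\<^sup>L (coupon_space n k) (\<lambda>\<omega>. real (?Y \<omega>))"
    unfolding E(2) by (rule tail_sums'[OF S(1)])
qed

end




lemma mono_real_nat: "mono (real :: nat \<Rightarrow> real)"
  by (auto intro: monoI)

context
  fixes n k :: nat and miss :: "nat \<Rightarrow> nat set"
  assumes npos: "n > 0" and miss: "\<And>i. i < k \<Longrightarrow> miss i \<subseteq> {..<n}" and kpos: "k > 0"
begin

lemma m_formula: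
  "integral\<^sup>L (coupon_space n k) (\<lambda>\<omega>. real (Min ((\<lambda>i. ptn miss i \<omega>) ` {..<k})))
   = (\<Sum>S\<in>Pow {..<k} - {{}}. (-1) ^ (card S + 1) *
        integral\<^sup>L (coupon_space n k) (\<lambda>\<omega>. real (Max ((\<lambda>i. ptn miss i \<omega>) ` S))))"
proof -
  interpret P: prob_space "coupon_space n k" by (rule prob_space_coupon)
  let ?K = "{..<k}"
  let ?P = "coupon_space n k"
  let ?F = "\<lambda>S t. measure ?P {\<omega>\<in>space ?P. \<forall>i\<in>S. cmp miss i t \<omega>}"
  let ?Y = "\<lambda>\<omega>. Min ((\<lambda>i. ptn miss i \<omega>) ` ?K)"
  have Kne: "?K \<noteq> {}" using kpos by auto
  have Ym: "?Y \<in> measurable ?P (count_space UNIV)"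
    by (rule Min_measurable[OF npos miss]) (use Kne in auto)
  have prob_eq: "measure ?P {\<omega>\<in>space ?P. t < ?Y \<omega>}
      = (\<Sum>S\<in>Pow ?K - {{}}. (-1) ^ (card S + 1) * (1 - ?F S t))" for t
  proof -
    have sK: "{\<omega>\<in>space ?P. cmp miss i t \<omega>} \<in> sets ?P" if "i \<in> ?K" for i
      using sets_cmp1[OF npos miss] that by auto
    have "measure ?P {\<omega>\<in>space ?P. t < ?Y \<omega>} = measure ?P {\<omega>\<in>space ?P. \<forall>i\<in>?K. \<not> cmp miss i t \<omega>}"
    proof (rule measure_eq_AE)
      have "AE \<omega> in ?P. \<forall>i\<in>?K. \<exists>t. cmp miss i t \<omega>"
      proof (rule AE_finite_allI)
        fix i assume "i \<in> ?K" then have "i < k" by simp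
        note AEc = AE_complete[OF npos miss this]
        show "AE \<omega> in ?P. \<exists>t. cmp miss i t \<omega>" using AEc by simp
      qed simp
      then show "AE \<omega> in ?P. (\<omega> \<in> {\<omega>\<in>space ?P. t < ?Y \<omega>}) = (\<omega> \<in> {\<omega>\<in>space ?P. \<forall>i\<in>?K. \<not> cmp miss i t \<omega>})"
      proof (eventually_elim)
        fix \<omega> assume ev: "\<forall>i\<in>?K. \<exists>t. cmp miss i t \<omega>"
        have "t < ?Y \<omega> \<longleftrightarrow> (\<forall>i\<in>?K. t < ptn miss i \<omega>)"
          using Min_gr_iff[of "(\<lambda>i. ptn miss i \<omega>) ` ?K" t] Kne by simp
        also have "\<dots> \<longleftrightarrow> (\<forall>i\<in>?K. \<not> cmp miss i t \<omega>)"
          using ev less_ptn_iff by blast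
        finally show "(\<omega> \<in> {\<omega>\<in>space ?P. t < ?Y \<omega>}) = (\<omega> \<in> {\<omega>\<in>space ?P. \<forall>i\<in>?K. \<not> cmp miss i t \<omega>})"
          by blast
      qed
      show "{\<omega>\<in>space ?P. t < ?Y \<omega>} \<in> sets ?P"
      proof -
        have "{\<omega>\<in>space ?P. t < ?Y \<omega>} = ?Y -` {t<..} \<inter> space ?P" by auto
        also have "\<dots> \<in> sets ?P" by (rule measurable_sets[OF Ym]) simp
        finally show ?thesis .
      qed
      show "{\<omega>\<in>space ?P. \<forall>i\<in>?K. \<not> cmp miss i t \<omega>} \<in> sets ?P"
        by (intro sets.sets_Collect_finite_All sets.sets_Collect_neg sK) simp_all
    qed
    also have "\<dots> = (\<Sum>S\<in>Pow ?K. (-1) ^ card S * ?F S t)"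
      by (rule prob_IE[OF prob_space_coupon]) (use sK in auto)
    also have "\<dots> = (\<Sum>S\<in>Pow ?K. (-1) ^ card S * ?F S t) - (\<Sum>S\<in>Pow ?K. (-1) ^ card S)"
      using sum_Pow_sign_zero[OF _ Kne] by simp
    also have "\<dots> = (\<Sum>S\<in>Pow ?K. (-1) ^ (card S + 1) * (1 - ?F S t))"
      unfolding sum_subtractf[symmetric] by (intro sum.cong refl) (simp add: algebra_simps)
    also have "\<dots> = (\<Sum>S\<in>Pow ?K - {{}}. (-1) ^ (card S + 1) * (1 - ?F S t))"
    proof (rule sum.mono_neutral_right)
      show "\<forall>S\<in>Pow ?K - (Pow ?K - {{}}). (-1) ^ (card S + 1) * (1 - ?F S t) = 0"
      proof
        fix S assume "S \<in> Pow ?K - (Pow ?K - {{}})"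
        then have "S = {}" by auto
        then show "(-1) ^ (card S + 1) * (1 - ?F S t) = 0" by (simp add: P.prob_space)
      qed
    qed auto
    finally show ?thesis .
  qed
  have sums: "(\<lambda>t. measure ?P {\<omega>\<in>space ?P. t < ?Y \<omega>}) sums
     (\<Sum>S\<in>Pow ?K - {{}}. (-1) ^ (card S + 1) *
        integral\<^sup>L ?P (\<lambda>\<omega>. real (Max ((\<lambda>i. ptn miss i \<omega>) ` S))))"
    unfolding prob_eq
  proof (intro sums_sum sums_mult)
    fix S assume S: "S \<in> Pow ?K - {{}}"
    show "(\<lambda>t. 1 - ?F S t) sums integral\<^sup>L ?P (\<lambda>\<omega>. real (Max ((\<lambda>i. ptn miss i \<omega>) ` S)))"
      by (rule M_formula(1)[OF npos miss]) (use S in auto)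
  qed
  show ?thesis by (rule expectation_nat(2)[OF prob_space_coupon Ym sums])
qed

lemma M_bound:
  assumes S: "S \<subseteq> {..<k}" "S \<noteq> {}"
  shows "\<bar>integral\<^sup>L (coupon_space n k) (\<lambda>\<omega>. real (Max ((\<lambda>i. ptn miss i \<omega>) ` S)))
           - real n * harm (card (Sigma S miss))\<bar> \<le> 2 ^ card (Sigma S miss)"
proof -
  let ?U = "Sigma S miss"
  have fS: "finite S" using S finite_subset by blast
  have missS: "\<And>i. i \<in> S \<Longrightarrow> miss i \<subseteq> {..<n}" using S miss by auto
  have fU: "finite ?U" using fS missS by (meson finite_SigmaI finite_lessThan finite_subset)
  have E: "integral\<^sup>L (coupon_space n k) (\<lambda>\<omega>. real (Max ((\<lambda>i. ptn miss i \<omega>) ` S)))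
     = (\<Sum>B\<in>Pow ?U - {{}}. (-1) ^ (card B + 1) * (1 / (1 - Rf n S B)))"
    using sums_unique2[OF M_formula(1)[OF npos miss S] tail_sums'[OF npos miss S(1)]] .
  have H: "real n * harm (card ?U) = (\<Sum>B\<in>Pow ?U - {{}}. (-1) ^ (card B + 1) * (real n / real (card B)))"
    unfolding harm_Pow[OF fU, symmetric] sum_distrib_left by (intro sum.cong refl) simp
  have "\<bar>(\<Sum>B\<in>Pow ?U - {{}}. (-1) ^ (card B + 1) * (1 / (1 - Rf n S B)))
        - (\<Sum>B\<in>Pow ?U - {{}}. (-1) ^ (card B + 1) * (real n / real (card B)))\<bar>
      = \<bar>\<Sum>B\<in>Pow ?U - {{}}. (-1) ^ (card B + 1) * (1 / (1 - Rf n S B) - real n / real (card B))\<bar>"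
    by (simp add: sum_subtractf[symmetric] algebra_simps)
  also have "\<dots> \<le> (\<Sum>B\<in>Pow ?U - {{}}. \<bar>(-1) ^ (card B + 1) * (1 / (1 - Rf n S B) - real n / real (card B))\<bar>)"
    by (rule sum_abs)
  also have "\<dots> \<le> (\<Sum>B\<in>Pow ?U - {{}}. 1)"
  proof (rule sum_mono)
    fix B assume B: "B \<in> Pow ?U - {{}}"
    have B1: "B \<subseteq> ?U" and B2: "B \<noteq> {}" using B by auto
    note RP = Rf_props[OF npos fS missS B1 B2]
    have "0 \<le> 1 / (1 - Rf n S B) - real n / real (card B)" "1 / (1 - Rf n S B) - real n / real (card B) \<le> 1"
      using RP by auto
    then show "\<bar>(-1) ^ (card B + 1) * (1 / (1 - Rf n S B) - real n / real (card B))\<bar> \<le> 1"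
      by (simp add: abs_mult)
  qed
  also have "\<dots> \<le> real (card (Pow ?U))"
    using fU by (simp add: card_Diff_subset)
  also have "\<dots> = 2 ^ card ?U" using fU by (simp add: card_Pow)
  finally show ?thesis unfolding E H .
qed

end




lemma Max_real_img:
  assumes "finite S" "S \<noteq> {}"
  shows "Max ((\<lambda>i. real (f i)) ` S) = real (Max (f ` S))"
  using mono_Max_commute[OF mono_real_nat, of "f ` S"] assms by (simp add: image_image)

lemma Min_real_img:
  assumes "finite S" "S \<noteq> {}"
  shows "Min ((\<lambda>i. real (f i)) ` S) = real (Min (f ` S))"
  using mono_Min_commute[OF mono_real_nat, of "f ` S"] assms by (simp add: image_image)

theorem mainTheorem3:
  fixes k :: nat and s :: "nat \<Rightarrow> nat" and C :: "nat \<Rightarrow> nat \<Rightarrow> nat set"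
  assumes "k \<ge> 1"
    and "\<And>n i. i < k \<Longrightarrow> s i \<le> n \<Longrightarrow> C n i \<subseteq> {..<n} \<and> card (C n i) + s i = n"
  shows "(\<forall>n. n \<ge> 1 \<and> (\<forall>i<k. s i \<le> n) \<longrightarrow>
           m_exp n k (C n) =
           (\<Sum>S | S \<subseteq> {..<k} \<and> S \<noteq> {}. (-1) ^ (card S + 1) * M_exp n k (C n) S)) \<and>
         (\<lambda>n. m_exp n k (C n) -
           real n * (\<Sum>S | S \<subseteq> {..<k} \<and> S \<noteq> {}. (-1) ^ (card S + 1) * harm (\<Sum>i\<in>S. s i)))
         \<in> o(\<lambda>n. real n)"
proof -
  define miss where "miss n i = {..<n} - C n i" for n i
  have kpos: "k > 0" using assms(1) by simp
  have missn: "miss n i \<subseteq> {..<n}" for n i unfolding miss_def by auto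
  have pt: "player_time n (C n) i \<omega> = real (ptn (miss n) i \<omega>)" for n i \<omega>
    unfolding miss_def by (rule player_time_ptn)
  have idx: "{S. S \<subseteq> {..<k} \<and> S \<noteq> {}} = Pow {..<k} - {{}}" by auto
  have Mexp: "M_exp n k (C n) S = integral\<^sup>L (coupon_space n k) (\<lambda>\<omega>. real (Max ((\<lambda>i. ptn (miss n) i \<omega>) ` S)))"
    if "S \<in> Pow {..<k} - {{}}" for n S
  proof -
    have "finite S" "S \<noteq> {}" using that finite_subset by auto
    then show ?thesis unfolding M_exp_def pt by (simp add: Max_real_img)
  qed
  have mexp: "m_exp n k (C n) = integral\<^sup>L (coupon_space n k) (\<lambda>\<omega>. real (Min ((\<lambda>i. ptn (miss n) i \<omega>) ` {..<k})))" for n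
  proof -
    have "{..<k} \<noteq> {}" using kpos by auto
    then show ?thesis unfolding m_exp_def pt by (simp add: Min_real_img[OF finite_lessThan])
  qed
  have part1: "m_exp n k (C n) =
           (\<Sum>S | S \<subseteq> {..<k} \<and> S \<noteq> {}. (-1) ^ (card S + 1) * M_exp n k (C n) S)" if n1: "n \<ge> 1" for n
  proof -
    have npos: "n > 0" using n1 by simp
    show ?thesis unfolding mexp idx m_formula[OF npos missn kpos]
      by (intro sum.cong refl) (simp add: Mexp)
  qed
  define K0 where "K0 = (\<Sum>S\<in>Pow {..<k} - {{}}. (2::real) ^ (\<Sum>i\<in>S. s i))"
  define N0 where "N0 = Max (insert 1 (s ` {..<k}))"
  have N0: "n \<ge> 1" "\<And>i. i < k \<Longrightarrow> s i \<le> n" if "n \<ge> N0" for n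
    using that unfolding N0_def by (auto simp: Max_ge_iff)
  have bound: "\<bar>m_exp n k (C n) -
           real n * (\<Sum>S | S \<subseteq> {..<k} \<and> S \<noteq> {}. (-1) ^ (card S + 1) * harm (\<Sum>i\<in>S. s i))\<bar> \<le> K0"
    if n: "n \<ge> N0" for n
  proof -
    have npos: "n > 0" using N0(1)[OF n] by simp
    have cardU: "card (Sigma S (miss n)) = (\<Sum>i\<in>S. s i)" if S: "S \<in> Pow {..<k} - {{}}" for S
    proof -
      have fS: "finite S" using S finite_subset by auto
      have "card (Sigma S (miss n)) = (\<Sum>i\<in>S. card (miss n i))"
        using fS missn by (intro card_SigmaI) (auto intro: finite_subset)
      also have "\<dots> = (\<Sum>i\<in>S. s i)"
      proof (intro sum.cong refl)
        fix i assume "i \<in> S" then have i: "i < k" using S by auto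
        have Cn: "C n i \<subseteq> {..<n} \<and> card (C n i) + s i = n" using assms(2)[OF i N0(2)[OF n i]] .
        then have "card (miss n i) = n - card (C n i)"
          unfolding miss_def by (subst card_Diff_subset) (auto intro: finite_subset)
        then show "card (miss n i) = s i" using Cn by linarith
      qed
      finally show ?thesis .
    qed
    have eq: "m_exp n k (C n) -
           real n * (\<Sum>S | S \<subseteq> {..<k} \<and> S \<noteq> {}. (-1) ^ (card S + 1) * harm (\<Sum>i\<in>S. s i))
       = (\<Sum>S\<in>Pow {..<k} - {{}}. (-1) ^ (card S + 1) *
           (integral\<^sup>L (coupon_space n k) (\<lambda>\<omega>. real (Max ((\<lambda>i. ptn (miss n) i \<omega>) ` S)))
            - real n * harm (card (Sigma S (miss n)))))"
      unfolding part1[OF N0(1)[OF n]] idx sum_distrib_left sum_subtractf[symmetric]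
    proof (intro sum.cong refl)
      fix S assume S: "S \<in> Pow {..<k} - {{}}"
      show "(-1) ^ (card S + 1) * M_exp n k (C n) S - real n * ((-1) ^ (card S + 1) * harm (sum s S))
        = (-1) ^ (card S + 1) *
           (integral\<^sup>L (coupon_space n k) (\<lambda>\<omega>. real (Max ((\<lambda>i. ptn (miss n) i \<omega>) ` S)))
            - real n * harm (card (Sigma S (miss n))))"
        unfolding Mexp[OF S] cardU[OF S] by (simp only: right_diff_distrib mult.left_commute)
    qed
    have "\<bar>\<Sum>S\<in>Pow {..<k} - {{}}. (-1) ^ (card S + 1) *
           (integral\<^sup>L (coupon_space n k) (\<lambda>\<omega>. real (Max ((\<lambda>i. ptn (miss n) i \<omega>) ` S)))
            - real n * harm (card (Sigma S (miss n))))\<bar> \<le> (\<Sum>S\<in>Pow {..<k} - {{}}. \<bar>(-1) ^ (card S + 1) *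
           (integral\<^sup>L (coupon_space n k) (\<lambda>\<omega>. real (Max ((\<lambda>i. ptn (miss n) i \<omega>) ` S)))
            - real n * harm (card (Sigma S (miss n))))\<bar>)"
      by (rule sum_abs)
    also have "\<dots> \<le> K0"
      unfolding K0_def
    proof (rule sum_mono)
      fix S assume S: "S \<in> Pow {..<k} - {{}}"
      have "\<bar>integral\<^sup>L (coupon_space n k) (\<lambda>\<omega>. real (Max ((\<lambda>i. ptn (miss n) i \<omega>) ` S)))
            - real n * harm (card (Sigma S (miss n)))\<bar> \<le> 2 ^ card (Sigma S (miss n))"
        by (rule M_bound[OF npos _ kpos]) (use S missn in auto)
      then show "\<bar>(-1) ^ (card S + 1) *
           (integral\<^sup>L (coupon_space n k) (\<lambda>\<omega>. real (Max ((\<lambda>i. ptn (miss n) i \<omega>) ` S)))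
            - real n * harm (card (Sigma S (miss n))))\<bar> \<le> 2 ^ (\<Sum>i\<in>S. s i)"
        using cardU[OF S] by (simp add: abs_mult)
    qed
    finally show ?thesis unfolding eq .
  qed
  have part2: "(\<lambda>n. m_exp n k (C n) -
           real n * (\<Sum>S | S \<subseteq> {..<k} \<and> S \<noteq> {}. (-1) ^ (card S + 1) * harm (\<Sum>i\<in>S. s i)))
         \<in> o(\<lambda>n. real n)"
  proof (rule landau_o.smallI)
    fix c :: real assume c: "c > 0"
    have "eventually (\<lambda>n. n \<ge> max N0 (nat \<lceil>K0 / c\<rceil>)) at_top" by (rule eventually_ge_at_top)
    then show "eventually (\<lambda>n. norm (m_exp n k (C n) -
           real n * (\<Sum>S | S \<subseteq> {..<k} \<and> S \<noteq> {}. (-1) ^ (card S + 1) * harm (\<Sum>i\<in>S. s i)))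
           \<le> c * norm (real n)) at_top"
    proof eventually_elim
      fix n assume n: "max N0 (nat \<lceil>K0 / c\<rceil>) \<le> n"
      have "K0 / c \<le> real n" using n by linarith
      then have "K0 \<le> c * real n" using c by (simp add: field_simps)
      then show "norm (m_exp n k (C n) -
           real n * (\<Sum>S | S \<subseteq> {..<k} \<and> S \<noteq> {}. (-1) ^ (card S + 1) * harm (\<Sum>i\<in>S. s i)))
           \<le> c * norm (real n)"
        using bound[of n] n by simp
    qed
  qed
  show ?thesis using part1 part2 by blast
qed



end
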